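(* Let $\eta_1,\eta_2,\dots\in\mathcal P(U)$, set $\eta(k):=\eta_1\wedge\eta_2\wedge\cdots\wedge\eta_k$ (products taken left to right), $g_{s,j}:=\mathbb I_{p_s}+\eta_j^{s,0}$ for $j\ge1$, $g_{s,0}:=\mathbb I_{p_s}$ and $g_s(k):=g_{s,0}g_{s,1}\cdots g_{s,k}$. Then for every integer $k\ge1$ and every $t\ge1$, $$\eta(k)^{s,t}=\Big(\sum_{\tau\in\Delta_t}\ \sum_{J\in J_k(\rho(\tau))}\ \bigwedge_{r=1}^{\rho(\tau)}\ g_{s+\sigma'(\tau,r)}(j_r-1)\cdot\eta_{j_r}^{\,s+\sigma(\tau,r),\ \tau_{\rho(\tau)+1-r}}\cdot g_{s+\sigma(\tau,r)}(j_r)^{-1}\Big)\cdot g_s(k),$$ where the wedge product over $r$ is taken in increasing order of $r$ from left to right, and the inner sum is empty when $k<\rho(\tau)$.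
   Context: $\mathcal P(U)$ is the set of families $\eta=(\eta^{s,k})_{0\le s\le m,0\le k\le m-s}$, $\eta^{s,k}$ a $p_{s+k}\times p_s$ matrix of smooth $(0,k)$-forms on $U$, with $\mathbb I_{p_s}+\eta^{s,0}$ invertible; semigroup law $(\eta_1\wedge\eta_2)^{s,k}=\eta_1^{s,k}+\eta_2^{s,k}+\sum_{j=0}^k\eta_1^{s+j,k-j}\wedge\eta_2^{s,j}$ (matrix products with wedge of entries). Conventions: components with indices outside the range are $0$. $\Delta_t:=\{\tau\in\mathbb N^t:\tau_j\neq0\Rightarrow\tau_{j-1}\neq0,\ \sum_{j=1}^t\tau_j=t\}$; $\rho(\tau):=\max\{j:\tau_j\neq0\}$; $J_k(\rho):=\{J=(j_1,\dots,j_\rho)\in\{1,\dots,k\}^\rho:j_1<\dots<j_\rho\}$; $\sigma'(\tau,r):=\sum_{j=1}^{\rho(\tau)+1-r}\tau_j$ and $\sigma(\tau,r):=\sum_{j=1}^{\rho(\tau)-r}\tau_j$. *)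

theory Defs
  imports "HOL-Analysis.Analysis"
begin

fun Ck_on :: "nat \<Rightarrow> 'a::real_normed_vector set \<Rightarrow> ('a \<Rightarrow> 'b::real_normed_vector) \<Rightarrow> bool" where
  "Ck_on 0 U f = continuous_on U f"
| "Ck_on (Suc k) U f =
     (\<exists>f'. (\<forall>x\<in>U. (f has_derivative f' x) (at x)) \<and> (\<forall>v. Ck_on k U (\<lambda>x. f' x v)))"

definition Cinf_on :: "'a::real_normed_vector set \<Rightarrow> ('a \<Rightarrow> 'b::real_normed_vector) \<Rightarrow> bool" where
  "Cinf_on U f \<longleftrightarrow> (\<forall>k. Ck_on k U f)"

section \<open>Pointwise (0,*)-forms: elements of the exterior algebra on d-zbar_i, i :: 'n\<close>

text \<open>An element is given by its coefficients: coefficient of d-zbar_I for I a set of indices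
  (taken in increasing order).\<close>

type_synonym 'n ext = "'n set \<Rightarrow> complex"

definition ezero :: "'n ext" where "ezero = (\<lambda>_. 0)"
definition eunit :: "'n ext" where "eunit = (\<lambda>K. if K = {} then 1 else 0)"

definition wsign :: "'n::linorder set \<Rightarrow> 'n set \<Rightarrow> complex" where
  "wsign I J = (-1) ^ card {(i, j). i \<in> I \<and> j \<in> J \<and> j < i}"

definition wedge :: "'n::{finite,linorder} ext \<Rightarrow> 'n ext \<Rightarrow> 'n ext" where
  "wedge \<alpha> \<beta> = (\<lambda>K. \<Sum>I\<in>Pow K. wsign I (K - I) * \<alpha> I * \<beta> (K - I))"

type_synonym 'n fmat = "nat \<Rightarrow> nat \<Rightarrow> 'n ext"

definition idm :: "nat \<Rightarrow> 'n fmat" where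
  "idm q = (\<lambda>i j. if i = j \<and> i < q then eunit else ezero)"

definition madd :: "'n fmat \<Rightarrow> 'n fmat \<Rightarrow> 'n fmat" where
  "madd A B = (\<lambda>i j K. A i j K + B i j K)"

definition mmul :: "nat \<Rightarrow> 'n::{finite,linorder} fmat \<Rightarrow> 'n fmat \<Rightarrow> 'n fmat" where
  "mmul q A B = (\<lambda>i j. (\<lambda>K. \<Sum>l<q. wedge (A i l) (B l j) K))"

definition minv :: "nat \<Rightarrow> 'n::{finite,linorder} fmat \<Rightarrow> 'n fmat" where
  "minv q A = (SOME B. (\<forall>i j. (q \<le> i \<or> q \<le> j) \<longrightarrow> B i j = ezero)
                 \<and> mmul q A B = idm q \<and> mmul q B A = idm q)"

text \<open>Ordered product F 1 * F 2 * ... * F n, where d r is the inner dimension between F r and F (r+1).\<close>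
definition mchain :: "(nat \<Rightarrow> nat) \<Rightarrow> (nat \<Rightarrow> 'n::{finite,linorder} fmat) \<Rightarrow> nat \<Rightarrow> 'n fmat" where
  "mchain d F n = foldl (\<lambda>A r. mmul (d (r - 1)) A (F r)) (F 1) [2..<Suc n]"

text \<open>A family: eta s k x is the matrix eta^{s,k} at the point x (entries i < p(s+k), j < p s).\<close>
type_synonym ('x, 'n) fam = "nat \<Rightarrow> nat \<Rightarrow> 'x \<Rightarrow> 'n fmat"

definition inP :: "nat \<Rightarrow> (nat \<Rightarrow> nat) \<Rightarrow> ((complex, 'n::{finite,linorder}) vec) set
                   \<Rightarrow> ((complex, 'n) vec, 'n) fam \<Rightarrow> bool" where
  "inP m p U \<eta> \<longleftrightarrow>
     \<comment> \<open>components with indices outside the range are zero\<close>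
     (\<forall>s k x. \<not> (s \<le> m \<and> k \<le> m - s) \<longrightarrow> \<eta> s k x = (\<lambda>i j. ezero))
   \<and> (\<forall>s k. s \<le> m \<and> k \<le> m - s \<longrightarrow>
        \<comment> \<open>matrix of size p(s+k) x p s\<close>
        (\<forall>x i j. (p (s + k) \<le> i \<or> p s \<le> j) \<longrightarrow> \<eta> s k x i j = ezero)
        \<comment> \<open>entries are smooth (0,k)-forms on U\<close>
      \<and> (\<forall>i j K. Cinf_on U (\<lambda>x. \<eta> s k x i j K))
      \<and> (\<forall>x\<in>U. \<forall>i j K. card K \<noteq> k \<longrightarrow> \<eta> s k x i j K = 0))
   \<and> (\<forall>s. s \<le> m \<longrightarrow>
        \<comment> \<open>I + eta^{s,0} is invertible as a matrix of smooth functions on U\<close>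
        (\<exists>B :: (complex, 'n) vec \<Rightarrow> 'n fmat.
            (\<forall>i j K. Cinf_on U (\<lambda>x. B x i j K))
          \<and> (\<forall>x i j K. K \<noteq> {} \<longrightarrow> B x i j K = 0)
          \<and> (\<forall>x i j. (p s \<le> i \<or> p s \<le> j) \<longrightarrow> B x i j = ezero)
          \<and> (\<forall>x\<in>U. mmul (p s) (madd (idm (p s)) (\<eta> s 0 x)) (B x) = idm (p s)
                  \<and> mmul (p s) (B x) (madd (idm (p s)) (\<eta> s 0 x)) = idm (p s))))"

definition fwedge :: "(nat \<Rightarrow> nat) \<Rightarrow> ('x, 'n::{finite,linorder}) fam \<Rightarrow> ('x, 'n) fam \<Rightarrow> ('x, 'n) fam" where
  "fwedge p \<eta>1 \<eta>2 = (\<lambda>s k x i j K.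
      \<eta>1 s k x i j K + \<eta>2 s k x i j K
      + (\<Sum>l\<le>k. mmul (p (s + l)) (\<eta>1 (s + l) (k - l) x) (\<eta>2 s l x) i j K))"

definition etaK :: "(nat \<Rightarrow> nat) \<Rightarrow> (nat \<Rightarrow> ('x, 'n::{finite,linorder}) fam) \<Rightarrow> nat \<Rightarrow> ('x, 'n) fam" where
  "etaK p \<eta> k = foldl (fwedge p) (\<eta> 1) (map \<eta> [2..<Suc k])"

definition gsj :: "(nat \<Rightarrow> nat) \<Rightarrow> (nat \<Rightarrow> ('x, 'n::{finite,linorder}) fam) \<Rightarrow> nat \<Rightarrow> nat \<Rightarrow> 'x \<Rightarrow> 'n fmat" where
  "gsj p \<eta> s j x = (if j = 0 then idm (p s) else madd (idm (p s)) (\<eta> j s 0 x))"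

definition gs :: "(nat \<Rightarrow> nat) \<Rightarrow> (nat \<Rightarrow> ('x, 'n::{finite,linorder}) fam) \<Rightarrow> nat \<Rightarrow> nat \<Rightarrow> 'x \<Rightarrow> 'n fmat" where
  "gs p \<eta> s k x = foldl (\<lambda>A j. mmul (p s) A (gsj p \<eta> s j x)) (gsj p \<eta> s 0 x) [1..<Suc k]"

text \<open>tau in N^t is represented as a function nat => nat, with tau_j at index j (1 <= j <= t)
  and value 0 at all other indices.\<close>
definition Delta :: "nat \<Rightarrow> (nat \<Rightarrow> nat) set" where
  "Delta t = {\<tau>. \<tau> 0 = 0 \<and> (\<forall>j>t. \<tau> j = 0)
              \<and> (\<forall>j\<in>{2..t}. \<tau> j \<noteq> 0 \<longrightarrow> \<tau> (j - 1) \<noteq> 0)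
              \<and> (\<Sum>j=1..t. \<tau> j) = t}"

definition rho :: "(nat \<Rightarrow> nat) \<Rightarrow> nat" where
  "rho \<tau> = Max {j. \<tau> j \<noteq> 0}"

text \<open>J = (j_1 < ... < j_rho) in {1..k}^rho, represented as a function with J r = j_r for
  1 <= r <= rho and 0 elsewhere.\<close>
definition Jset :: "nat \<Rightarrow> nat \<Rightarrow> (nat \<Rightarrow> nat) set" where
  "Jset k \<rho> = {J. (\<forall>r. (r = 0 \<or> \<rho> < r) \<longrightarrow> J r = 0)
               \<and> (\<forall>r\<in>{1..\<rho>}. 1 \<le> J r \<and> J r \<le> k)
               \<and> (\<forall>r\<in>{1..<\<rho>}. J r < J (Suc r))}"

definition sigma' :: "(nat \<Rightarrow> nat) \<Rightarrow> nat \<Rightarrow> nat" where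
  "sigma' \<tau> r = (\<Sum>j=1..rho \<tau> + 1 - r. \<tau> j)"

definition sigma :: "(nat \<Rightarrow> nat) \<Rightarrow> nat \<Rightarrow> nat" where
  "sigma \<tau> r = (\<Sum>j=1..rho \<tau> - r. \<tau> j)"

definition factor :: "(nat \<Rightarrow> nat) \<Rightarrow> (nat \<Rightarrow> ('x, 'n::{finite,linorder}) fam)
                     \<Rightarrow> nat \<Rightarrow> (nat \<Rightarrow> nat) \<Rightarrow> (nat \<Rightarrow> nat) \<Rightarrow> 'x \<Rightarrow> nat \<Rightarrow> 'n fmat" where
  "factor p \<eta> s \<tau> J x r =
     mmul (p (s + sigma \<tau> r))
       (mmul (p (s + sigma' \<tau> r))
          (gs p \<eta> (s + sigma' \<tau> r) (J r - 1) x)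
          (\<eta> (J r) (s + sigma \<tau> r) (\<tau> (rho \<tau> + 1 - r)) x))
       (minv (p (s + sigma \<tau> r)) (gs p \<eta> (s + sigma \<tau> r) (J r) x))"

definition rhs :: "(nat \<Rightarrow> nat) \<Rightarrow> (nat \<Rightarrow> ('x, 'n::{finite,linorder}) fam)
                  \<Rightarrow> nat \<Rightarrow> nat \<Rightarrow> nat \<Rightarrow> 'x \<Rightarrow> 'n fmat" where
  "rhs p \<eta> k s t x =
     mmul (p s)
       (\<lambda>i j K. \<Sum>\<tau>\<in>Delta t. \<Sum>J\<in>Jset k (rho \<tau>).
           mchain (\<lambda>r. p (s + sigma \<tau> r)) (factor p \<eta> s \<tau> J x) (rho \<tau>) i j K)
       (gs p \<eta> s k x)"

end

theory Submission
  imports Defs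
begin


lemma wsign_Un_left:
  fixes A B C :: "'n::{finite,linorder} set"
  assumes "A \<inter> B = {}"
  shows "wsign (A \<union> B) C = wsign A C * wsign B C"
proof -
  have e: "{(i, j). i \<in> A \<union> B \<and> j \<in> C \<and> j < i} =
    {(i, j). i \<in> A \<and> j \<in> C \<and> j < i} \<union> {(i, j). i \<in> B \<and> j \<in> C \<and> j < i}" by auto
  have d: "{(i, j). i \<in> A \<and> j \<in> C \<and> j < i} \<inter> {(i, j). i \<in> B \<and> j \<in> C \<and> j < i} = {}"
    using assms by auto
  show ?thesis unfolding wsign_def e
    by (subst card_Un_disjoint) (auto simp: d power_add)
qed

lemma wsign_Un_right:
  fixes A B C :: "'n::{finite,linorder} set"
  assumes "B \<inter> C = {}"
  shows "wsign A (B \<union> C) = wsign A B * wsign A C"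
proof -
  have e: "{(i, j). i \<in> A \<and> j \<in> B \<union> C \<and> j < i} =
    {(i, j). i \<in> A \<and> j \<in> B \<and> j < i} \<union> {(i, j). i \<in> A \<and> j \<in> C \<and> j < i}" by auto
  have d: "{(i, j). i \<in> A \<and> j \<in> B \<and> j < i} \<inter> {(i, j). i \<in> A \<and> j \<in> C \<and> j < i} = {}"
    using assms by auto
  show ?thesis unfolding wsign_def e
    by (subst card_Un_disjoint) (auto simp: d power_add)
qed

lemma wedge_assoc:
  fixes a b c :: "'n::{finite,linorder} ext"
  shows "wedge (wedge a b) c = wedge a (wedge b c)"
proof
  fix K :: "'n set"
  let ?g = "\<lambda>(I1, I2). wsign I1 I2 * wsign I1 (K - I1 - I2) * wsign I2 (K - I1 - I2)
              * a I1 * b I2 * c (K - I1 - I2)"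
  have L: "wedge (wedge a b) c K = (\<Sum>(I, I1)\<in>Sigma (Pow K) Pow.
       wsign I (K - I) * wsign I1 (I - I1) * a I1 * b (I - I1) * c (K - I))"
    unfolding wedge_def
    by (subst sum.Sigma[symmetric]) (auto simp: sum_distrib_left sum_distrib_right mult.assoc
        intro!: sum.cong)
  have R: "wedge a (wedge b c) K = (\<Sum>(I1, I2)\<in>Sigma (Pow K) (\<lambda>I1. Pow (K - I1)).
       wsign I1 (K - I1) * wsign I2 (K - I1 - I2) * a I1 * b I2 * c (K - I1 - I2))"
    unfolding wedge_def
    by (subst sum.Sigma[symmetric]) (auto simp: sum_distrib_left sum_distrib_right mult.assoc
        mult.left_commute intro!: sum.cong)
  have bij: "bij_betw (\<lambda>(I1, I2). (I1 \<union> I2, I1)) (Sigma (Pow K) (\<lambda>I1. Pow (K - I1))) (Sigma (Pow K) Pow)"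
    by (rule bij_betwI[where g = "\<lambda>(I, I1). (I1, I - I1)"]) auto
  have "wedge (wedge a b) c K = (\<Sum>(I1, I2)\<in>Sigma (Pow K) (\<lambda>I1. Pow (K - I1)).
       wsign (I1 \<union> I2) (K - (I1 \<union> I2)) * wsign I1 ((I1 \<union> I2) - I1) * a I1 * b ((I1 \<union> I2) - I1) * c (K - (I1 \<union> I2)))"
    unfolding L by (subst sum.reindex_bij_betw[OF bij, symmetric]) (simp add: case_prod_beta)
  also have "\<dots> = (\<Sum>(I1, I2)\<in>Sigma (Pow K) (\<lambda>I1. Pow (K - I1)).
       wsign I1 (K - I1) * wsign I2 (K - I1 - I2) * a I1 * b I2 * c (K - I1 - I2))"
  proof (rule sum.cong[OF refl], clarify)
    fix I1 I2 assume h: "I1 \<subseteq> K" "I2 \<subseteq> K - I1"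
    have d: "I1 \<inter> I2 = {}" using h by auto
    have e1: "I1 \<union> I2 - I1 = I2" using d by auto
    have e2: "K - (I1 \<union> I2) = K - I1 - I2" by auto
    have e3: "K - I1 = I2 \<union> (K - I1 - I2)" using h by auto
    have s1: "wsign (I1 \<union> I2) (K - I1 - I2) = wsign I1 (K - I1 - I2) * wsign I2 (K - I1 - I2)"
      by (rule wsign_Un_left[OF d])
    have s2: "wsign I1 (K - I1) = wsign I1 I2 * wsign I1 (K - I1 - I2)"
      by (subst e3, rule wsign_Un_right) auto
    show "wsign (I1 \<union> I2) (K - (I1 \<union> I2)) * wsign I1 (I1 \<union> I2 - I1) * a I1 * b (I1 \<union> I2 - I1) * c (K - (I1 \<union> I2)) =
          wsign I1 (K - I1) * wsign I2 (K - I1 - I2) * a I1 * b I2 * c (K - I1 - I2)"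
      unfolding e1 e2 s1 s2 by (simp add: algebra_simps)
  qed
  finally show "wedge (wedge a b) c K = wedge a (wedge b c) K" using R by simp
qed

lemma wedge_sum_left:
  "wedge (\<lambda>K. \<Sum>x\<in>S. f x K) c K = (\<Sum>x\<in>S. wedge (f x) c K)"
  unfolding wedge_def by (simp add: sum_distrib_left sum_distrib_right mult.assoc sum.swap[of _ _ S])

lemma wedge_sum_right:
  "wedge a (\<lambda>K. \<Sum>x\<in>S. f x K) K = (\<Sum>x\<in>S. wedge a (f x) K)"
  unfolding wedge_def by (simp add: sum_distrib_left sum_distrib_right mult.assoc sum.swap[of _ _ S])

lemma wedge_add_left: "wedge (\<lambda>K. a K + b K) c K = wedge a c K + wedge b c K"
  unfolding wedge_def by (simp add: algebra_simps sum.distrib)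

lemma wedge_add_right: "wedge a (\<lambda>K. b K + c K) K = wedge a b K + wedge a c K"
  unfolding wedge_def by (simp add: algebra_simps sum.distrib)

lemma wedge_ezero_left[simp]: "wedge ezero b = ezero"
  unfolding wedge_def ezero_def by simp
lemma wedge_ezero_right[simp]: "wedge a ezero = ezero"
  unfolding wedge_def ezero_def by simp
lemma wedge_zero_left[simp]: "wedge (\<lambda>_. 0) b K = 0"
  unfolding wedge_def by simp
lemma wedge_zero_right[simp]: "wedge a (\<lambda>_. 0) K = 0"
  unfolding wedge_def by simp

lemma wedge_eunit_left[simp]: "wedge eunit b = b"
proof
  fix K :: "'a set"
  have "wedge eunit b K = (\<Sum>I\<in>Pow K. if I = {} then wsign I (K - I) * b (K - I) else 0)"
    unfolding wedge_def eunit_def by (rule sum.cong) auto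
  also have "\<dots> = b K" by (simp add: sum.delta wsign_def)
  finally show "wedge eunit b K = b K" .
qed

lemma wedge_eunit_right[simp]: "wedge a eunit = a"
proof
  fix K :: "'a set"
  have "wedge a eunit K = (\<Sum>I\<in>Pow K. if I = K then wsign I (K - I) * a I else 0)"
    unfolding wedge_def eunit_def by (rule sum.cong) auto
  also have "\<dots> = a K" by (simp add: sum.delta wsign_def)
  finally show "wedge a eunit K = a K" .
qed

lemma mmul_assoc: "mmul q1 (mmul q2 A B) C = mmul q2 A (mmul q1 B C)"
  unfolding mmul_def
  by (simp add: wedge_sum_left wedge_sum_right wedge_assoc, subst sum.swap, rule refl)

lemma mmul_idm_right: "j < q \<Longrightarrow> mmul q A (idm q) i j = A i j"
proof
  fix K assume j: "j < q"
  have "mmul q A (idm q) i j K = (\<Sum>l<q. if l = j then A i j K else 0)"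
    unfolding mmul_def by (rule sum.cong) (auto simp: idm_def ezero_def)
  also have "\<dots> = A i j K" using j by (simp add: sum.delta')
  finally show "mmul q A (idm q) i j K = A i j K" .
qed

lemma mmul_idm_left: "i < q \<Longrightarrow> mmul q (idm q) A i j = A i j"
proof
  fix K assume i: "i < q"
  have "mmul q (idm q) A i j K = (\<Sum>l<q. if l = i then A i j K else 0)"
    unfolding mmul_def by (rule sum.cong) (auto simp: idm_def ezero_def)
  also have "\<dots> = A i j K" using i by (simp add: sum.delta')
  finally show "mmul q (idm q) A i j K = A i j K" .
qed

definition supp :: "nat \<Rightarrow> 'n fmat \<Rightarrow> bool" where
  "supp q A \<longleftrightarrow> (\<forall>i j. (q \<le> i \<or> q \<le> j) \<longrightarrow> A i j = ezero)"

lemma mmul_idm_right_full: "supp q A \<Longrightarrow> mmul q A (idm q) = A"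
proof (intro ext)
  fix i j K assume s: "supp q A"
  show "mmul q A (idm q) i j K = A i j K"
  proof (cases "j < q")
    case True then show ?thesis by (simp add: mmul_idm_right)
  next
    case False
    then have "A i j = ezero" using s by (simp add: supp_def)
    moreover have "mmul q A (idm q) i j K = 0" using False
      unfolding mmul_def by (auto simp: idm_def ezero_def intro!: sum.neutral)
    ultimately show ?thesis by (simp add: ezero_def)
  qed
qed

lemma mmul_idm_left_full: "supp q A \<Longrightarrow> mmul q (idm q) A = A"
proof (intro ext)
  fix i j K assume s: "supp q A"
  show "mmul q (idm q) A i j K = A i j K"
  proof (cases "i < q")
    case True then show ?thesis by (simp add: mmul_idm_left)
  next
    case False
    then have "A i j = ezero" using s by (simp add: supp_def)
    moreover have "mmul q (idm q) A i j K = 0" using False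
      unfolding mmul_def by (auto simp: idm_def ezero_def intro!: sum.neutral)
    ultimately show ?thesis by (simp add: ezero_def)
  qed
qed

lemma supp_mmul: "supp q A \<Longrightarrow> supp q B \<Longrightarrow> supp q (mmul q A B)"
proof -
  assume a: "supp q A" "supp q B"
  show "supp q (mmul q A B)" unfolding supp_def
  proof (intro allI impI ext)
    fix i j K assume h: "q \<le> i \<or> q \<le> j"
    have "\<And>l. l < q \<Longrightarrow> wedge (A i l) (B l j) K = 0"
    proof -
      fix l assume "l < q"
      then have "A i l = ezero \<or> B l j = ezero" using a h unfolding supp_def by blast
      then show "wedge (A i l) (B l j) K = 0" by (auto simp: ezero_def)
    qed
    then show "mmul q A B i j K = ezero K" unfolding mmul_def ezero_def by simp
  qed
qed

lemma supp_idm: "supp q (idm q)"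
  unfolding supp_def idm_def by auto

lemma supp_madd: "supp q A \<Longrightarrow> supp q B \<Longrightarrow> supp q (madd A B)"
  unfolding supp_def madd_def by (auto simp: ezero_def)

definition isinv :: "nat \<Rightarrow> 'n::{finite,linorder} fmat \<Rightarrow> 'n fmat \<Rightarrow> bool" where
  "isinv q A B \<longleftrightarrow> (\<forall>i j. (q \<le> i \<or> q \<le> j) \<longrightarrow> B i j = ezero)
                 \<and> mmul q A B = idm q \<and> mmul q B A = idm q"

lemma isinv_mmul:
  assumes "supp q A" "supp q C" "isinv q A A'" "isinv q C C'"
  shows "isinv q (mmul q A C) (mmul q C' A')"
proof -
  have sA': "supp q A'" "supp q C'" using assms(3,4) by (auto simp: isinv_def supp_def)
  have "mmul q (mmul q A C) (mmul q C' A') = mmul q A (mmul q (mmul q C C') A')"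
    by (simp add: mmul_assoc)
  also have "\<dots> = idm q" using assms sA' by (simp add: isinv_def mmul_idm_left_full)
  finally have 1: "mmul q (mmul q A C) (mmul q C' A') = idm q" .
  have "mmul q (mmul q C' A') (mmul q A C) = mmul q C' (mmul q (mmul q A' A) C)"
    by (simp add: mmul_assoc)
  also have "\<dots> = idm q" using assms sA' by (simp add: isinv_def mmul_idm_left_full)
  finally have 2: "mmul q (mmul q C' A') (mmul q A C) = idm q" .
  show ?thesis using 1 2 supp_mmul[OF sA'(2) sA'(1)] by (simp add: isinv_def supp_def)
qed

lemma minv_left: "isinv q A B \<Longrightarrow> mmul q (minv q A) A = idm q"
proof -
  assume "isinv q A B"
  then have "isinv q A (SOME B. isinv q A B)" by (rule someI[where P="isinv q A"])
  moreover have "minv q A = (SOME B. isinv q A B)" unfolding minv_def isinv_def by (rule refl)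
  ultimately have "isinv q A (minv q A)" by simp
  then show ?thesis by (simp add: isinv_def)
qed

lemma gs_0: "gs p \<eta> s 0 x = idm (p s)"
  by (simp add: gs_def gsj_def)

lemma gs_Suc: "gs p \<eta> s (Suc k) x = mmul (p s) (gs p \<eta> s k x) (gsj p \<eta> s (Suc k) x)"
  unfolding gs_def by simp

lemma gsj_Suc: "gsj p \<eta> s (Suc k) x = madd (idm (p s)) (\<eta> (Suc k) s 0 x)"
  by (simp add: gsj_def)

lemma isinv_idm: "isinv q (idm q) (idm q)"
  using mmul_idm_left_full[OF supp_idm, of q] unfolding isinv_def
  by (simp add: idm_def)

lemma gsj_inv:
  assumes P: "\<And>j. j \<ge> 1 \<Longrightarrow> inP m p U (\<eta> j)" and x: "x \<in> U"
  shows "supp (p s) (gsj p \<eta> s j x) \<and> (\<exists>B. isinv (p s) (gsj p \<eta> s j x) B)"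
proof (cases j)
  case 0
  then have "gsj p \<eta> s j x = idm (p s)" by (simp add: gsj_def)
  then show ?thesis using supp_idm[of "p s"] isinv_idm[of "p s"] by metis
next
  case (Suc j')
  have Pj: "inP m p U (\<eta> j)" using P Suc by simp
  show ?thesis
  proof (cases "s \<le> m")
    case False
    then have "\<eta> j s 0 x = (\<lambda>i j. ezero)" using Pj by (simp add: inP_def)
    then have "gsj p \<eta> s j x = idm (p s)" using Suc
      by (auto simp: gsj_def madd_def ezero_def)
    then show ?thesis using supp_idm[of "p s"] isinv_idm[of "p s"] by metis
  next
    case True
    have se: "supp (p s) (\<eta> j s 0 x)" using Pj True by (simp add: inP_def supp_def)
    from Pj[unfolded inP_def, THEN conjunct2, THEN conjunct2, rule_format, OF True]
    obtain B where B: "\<forall>x i j. (p s \<le> i \<or> p s \<le> j) \<longrightarrow> B x i j = ezero"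
       "\<forall>x\<in>U. mmul (p s) (madd (idm (p s)) (\<eta> j s 0 x)) (B x) = idm (p s)
                  \<and> mmul (p s) (B x) (madd (idm (p s)) (\<eta> j s 0 x)) = idm (p s)"
      by blast
    have "isinv (p s) (gsj p \<eta> s j x) (B x)" using B x Suc by (simp add: isinv_def gsj_def)
    moreover have "supp (p s) (gsj p \<eta> s j x)" using Suc supp_madd[OF supp_idm se] by (simp add: gsj_def)
    ultimately show ?thesis by blast
  qed
qed

lemma gs_inv:
  assumes P: "\<And>j. j \<ge> 1 \<Longrightarrow> inP m p U (\<eta> j)" and x: "x \<in> U"
  shows "supp (p s) (gs p \<eta> s k x) \<and> (\<exists>B. isinv (p s) (gs p \<eta> s k x) B)"
proof -
  have GI: "\<And>s j. supp (p s) (gsj p \<eta> s j x) \<and> (\<exists>B. isinv (p s) (gsj p \<eta> s j x) B)"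
    using gsj_inv[where m=m and p=p and U=U and \<eta>=\<eta> and x=x] P x by blast
  show ?thesis
proof (induction k)
  case 0
  then show ?case using GI[of s 0] by (simp add: gs_0 gsj_def)
next
  case (Suc k)
  then obtain A' where A': "isinv (p s) (gs p \<eta> s k x) A'" by blast
  obtain C' where C': "isinv (p s) (gsj p \<eta> s (Suc k) x) C'" using GI by blast
  have s1: "supp (p s) (gs p \<eta> s k x)" using Suc by blast
  have s2: "supp (p s) (gsj p \<eta> s (Suc k) x)" using GI by blast
  show ?case unfolding gs_Suc
    using isinv_mmul[OF s1 s2 A' C'] supp_mmul[OF s1 s2] by blast
qed
qed

lemma gs_minv_left:
  assumes P: "\<And>j. j \<ge> 1 \<Longrightarrow> inP m p U (\<eta> j)" and x: "x \<in> U"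
  shows "mmul (p s) (minv (p s) (gs p \<eta> s k x)) (gs p \<eta> s k x) = idm (p s)"
  using gs_inv[where m=m and p=p and U=U and \<eta>=\<eta> and x=x and s=s and k=k] P x minv_left by blast



definition single :: "nat \<Rightarrow> nat \<Rightarrow> nat" where
  "single t = (\<lambda>j. if j = 1 then t else 0)"
definition tcons :: "nat \<Rightarrow> (nat \<Rightarrow> nat) \<Rightarrow> nat \<Rightarrow> nat" where
  "tcons l \<tau> = (\<lambda>j. if j = 0 then 0 else if j = 1 then l else \<tau> (j - 1))"
definition ttail :: "(nat \<Rightarrow> nat) \<Rightarrow> nat \<Rightarrow> nat" where
  "ttail \<tau> = (\<lambda>j. if j = 0 then 0 else \<tau> (Suc j))"

lemma Delta_D:
  assumes "\<tau> \<in> Delta t"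
  shows "\<tau> 0 = 0" "\<And>j. t < j \<Longrightarrow> \<tau> j = 0"
    "\<And>j. 2 \<le> j \<Longrightarrow> j \<le> t \<Longrightarrow> \<tau> j \<noteq> 0 \<Longrightarrow> \<tau> (j - 1) \<noteq> 0"
    "(\<Sum>j=1..t. \<tau> j) = t"
  using assms by (auto simp: Delta_def)

lemma Delta_pos:
  assumes D: "\<tau> \<in> Delta t" and nz: "\<tau> j \<noteq> 0" and i: "1 \<le> i" "i \<le> j"
  shows "\<tau> i \<noteq> 0"
proof -
  have "\<And>d. 1 \<le> j - d \<Longrightarrow> \<tau> (j - d) \<noteq> 0"
  proof -
    fix d show "1 \<le> j - d \<Longrightarrow> \<tau> (j - d) \<noteq> 0"
    proof (induction d)
      case 0 then show ?case using nz by simp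
    next
      case (Suc d)
      have h: "2 \<le> j - d" using Suc.prems by linarith
      then have a: "\<tau> (j - d) \<noteq> 0" using Suc.IH by linarith
      have le: "j - d \<le> t"
      proof (rule ccontr)
        assume "\<not> j - d \<le> t"
        then have "\<tau> (j - d) = 0" using Delta_D(2)[OF D] by simp
        then show False using a by simp
      qed
      have "\<tau> (j - d - 1) \<noteq> 0" using Delta_D(3)[OF D h le a] .
      moreover have "j - d - 1 = j - Suc d" by linarith
      ultimately show ?case by simp
    qed
  qed
  from this[of "j - i"] i have "\<tau> (j - (j - i)) \<noteq> 0" by linarith
  moreover have "j - (j - i) = i" using i by linarith
  ultimately show ?thesis by simp
qed

lemma Delta_le: "\<tau> \<in> Delta t \<Longrightarrow> \<tau> j \<noteq> 0 \<Longrightarrow> j \<le> t"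
  using Delta_D(2) by (cases "t < j") auto

lemma Delta_bound:
  assumes D: "\<tau> \<in> Delta t" and nz: "\<tau> (Suc j) \<noteq> 0"
  shows "\<tau> 1 + j \<le> t"
proof -
  have le: "Suc j \<le> t" using Delta_le[OF D nz] .
  have "(\<Sum>i=1..Suc j. \<tau> i) \<le> (\<Sum>i=1..t. \<tau> i)"
    using le by (intro sum_mono2) auto
  also have "\<dots> = t" using Delta_D(4)[OF D] .
  finally have 1: "(\<Sum>i=1..Suc j. \<tau> i) \<le> t" .
  have "(\<Sum>i=1..Suc j. \<tau> i) = \<tau> 1 + (\<Sum>i=Suc 1..Suc j. \<tau> i)"
    by (subst sum.atLeast_Suc_atMost) auto
  moreover have "(\<Sum>i=Suc 1..Suc j. (1::nat)) \<le> (\<Sum>i=Suc 1..Suc j. \<tau> i)"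
    using Delta_pos[OF D nz] by (intro sum_mono) (auto simp: Suc_le_eq)
  ultimately have "\<tau> 1 + j \<le> (\<Sum>i=1..Suc j. \<tau> i)" by simp
  with 1 show ?thesis by simp
qed

lemma sum_shift1: "(\<Sum>j=1..n. f (Suc j)) = (\<Sum>j=2..Suc n. (f j :: nat))"
  unfolding numeral_2_eq_2 One_nat_def by (rule sum.shift_bounds_cl_Suc_ivl[symmetric])

lemma sum_tcons: "1 \<le> n \<Longrightarrow> (\<Sum>j=1..n. tcons l \<tau> j) = l + (\<Sum>j=1..n - 1. \<tau> j)"
proof -
  assume n: "1 \<le> n"
  have "(\<Sum>j=1..n. tcons l \<tau> j) = tcons l \<tau> 1 + (\<Sum>j=Suc 1..n. tcons l \<tau> j)"
    using n by (subst sum.atLeast_Suc_atMost) auto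
  also have "(\<Sum>j=Suc 1..n. tcons l \<tau> j) = (\<Sum>j=Suc 1..Suc (n - 1). tcons l \<tau> j)" using n by simp
  also have "\<dots> = (\<Sum>j=1..n-1. tcons l \<tau> (Suc j))" by (rule sum.shift_bounds_cl_Suc_ivl)
  also have "\<dots> = (\<Sum>j=1..n-1. \<tau> j)" by (rule sum.cong) (auto simp: tcons_def)
  finally show ?thesis by (simp add: tcons_def)
qed

lemma single_Delta: "1 \<le> t \<Longrightarrow> single t \<in> Delta t"
  unfolding Delta_def single_def by (auto simp: sum.delta)

lemma tcons_Delta:
  assumes l: "1 \<le> l" "l < t" and D: "\<tau> \<in> Delta (t - l)"
  shows "tcons l \<tau> \<in> Delta t"
proof -
  have z: "\<And>j. t - l < j \<Longrightarrow> \<tau> j = 0" using Delta_D(2)[OF D] .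
  have s: "(\<Sum>j=1..t - 1. \<tau> j) = (\<Sum>j=1..t - l. \<tau> j)"
    using l z by (intro sum.mono_neutral_right) auto
  have "(\<Sum>j=1..t. tcons l \<tau> j) = l + (\<Sum>j=1..t - 1. \<tau> j)"
    by (rule sum_tcons) (use l in simp)
  then have "(\<Sum>j=1..t. tcons l \<tau> j) = t"
    using l s Delta_D(4)[OF D] by simp
  moreover have "\<forall>j\<in>{2..t}. tcons l \<tau> j \<noteq> 0 \<longrightarrow> tcons l \<tau> (j - 1) \<noteq> 0"
  proof (intro ballI impI)
    fix j assume j: "j \<in> {2..t}" and nz: "tcons l \<tau> j \<noteq> 0"
    show "tcons l \<tau> (j - 1) \<noteq> 0"
    proof (cases "j = 2")
      case True then show ?thesis using l by (simp add: tcons_def)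
    next
      case False
      then have nz': "\<tau> (j - 1) \<noteq> 0" using j nz by (simp add: tcons_def)
      have "j - 1 \<le> t - l" using Delta_le[OF D nz'] .
      then have "\<tau> (j - 1 - 1) \<noteq> 0" using Delta_D(3)[OF D, of "j - 1"] nz' False j by auto
      then show ?thesis using False j l by (simp add: tcons_def)
    qed
  qed
  moreover have "\<forall>j>t. tcons l \<tau> j = 0" using z l by (auto simp: tcons_def)
  ultimately show ?thesis unfolding Delta_def by (simp add: tcons_def)
qed

lemma Delta_cases:
  assumes D: "\<tau> \<in> Delta t" and t: "1 \<le> t"
  shows "\<tau> = single t \<or> (\<exists>l\<in>{1..<t}. \<exists>\<tau>'\<in>Delta (t - l). \<tau> = tcons l \<tau>')"
proof -
  have ex: "\<exists>j\<in>{1..t}. \<tau> j \<noteq> 0"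
  proof (rule ccontr)
    assume "\<not> ?thesis"
    then have "(\<Sum>j=1..t. \<tau> j) = 0" by auto
    then show False using Delta_D(4)[OF D] t by simp
  qed
  then obtain j where j: "j \<in> {1..t}" "\<tau> j \<noteq> 0" by blast
  have t1: "\<tau> 1 \<noteq> 0" using Delta_pos[OF D j(2), where i=1] j by auto
  have split: "(\<Sum>j=1..t. \<tau> j) = \<tau> 1 + (\<Sum>j=Suc 1..t. \<tau> j)"
    using t by (subst sum.atLeast_Suc_atMost) auto
  show ?thesis
  proof (cases "\<tau> 1 = t")
    case True
    then have "(\<Sum>j=Suc 1..t. \<tau> j) = 0" using split Delta_D(4)[OF D] by simp
    then have z: "\<And>j. 2 \<le> j \<Longrightarrow> j \<le> t \<Longrightarrow> \<tau> j = 0" by simp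
    have "\<tau> = single t"
    proof
      fix j show "\<tau> j = single t j"
        using z[of j] Delta_D(1)[OF D] Delta_D(2)[OF D, of j] True
        by (cases "j = 0"; cases "j = 1"; cases "t < j") (auto simp: single_def)
    qed
    then show ?thesis by blast
  next
    case False
    define l where "l = \<tau> 1"
    have l: "1 \<le> l" "l < t" using t1 False split Delta_D(4)[OF D] unfolding l_def by auto
    have tz: "\<And>j. t - l < j \<Longrightarrow> \<tau> (Suc j) = 0"
    proof (rule ccontr)
      fix j assume j: "t - l < j" "\<tau> (Suc j) \<noteq> 0"
      have "l + j \<le> t" using Delta_bound[OF D j(2)] unfolding l_def .
      then show False using j(1) by linarith
    qed 
    have "ttail \<tau> \<in> Delta (t - l)"
    proof -
      have "(\<Sum>j=1..t - l. ttail \<tau> j) = (\<Sum>j=1..t - l. \<tau> (Suc j))"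
        by (rule sum.cong) (auto simp: ttail_def)
      also have "\<dots> = (\<Sum>j=1..t - 1. \<tau> (Suc j))"
        using l tz by (intro sum.mono_neutral_left) auto
      also have "\<dots> = (\<Sum>j=2..t. \<tau> j)" using sum_shift1[of \<tau> "t - 1"] t by simp
      also have "\<dots> = t - l" using split Delta_D(4)[OF D] unfolding l_def by (simp add: numeral_2_eq_2)
      finally have s: "(\<Sum>j=1..t - l. ttail \<tau> j) = t - l" .
      have g: "\<forall>j\<in>{2..t - l}. ttail \<tau> j \<noteq> 0 \<longrightarrow> ttail \<tau> (j - 1) \<noteq> 0"
      proof (intro ballI impI)
        fix j assume j: "j \<in> {2..t - l}" and nz: "ttail \<tau> j \<noteq> 0"
        have "\<tau> (Suc j) \<noteq> 0" using nz j by (simp add: ttail_def)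
        then have "\<tau> (Suc j - 1) \<noteq> 0" using Delta_D(3)[OF D, of "Suc j"] j l by auto
        then show "ttail \<tau> (j - 1) \<noteq> 0" using j by (simp add: ttail_def)
      qed
      have z: "ttail \<tau> 0 = 0" by (simp add: ttail_def)
      have "\<forall>j>t - l. ttail \<tau> j = 0" using tz by (simp add: ttail_def)
      then show ?thesis unfolding Delta_def using s g z by blast
    qed
    moreover have "\<tau> = tcons l (ttail \<tau>)"
    proof
      fix j show "\<tau> j = tcons l (ttail \<tau>) j"
        using Delta_D(1)[OF D] unfolding l_def tcons_def ttail_def
        by (cases "j = 0"; cases "j = 1") auto
    qed
    ultimately show ?thesis using l by auto
  qed
qed

lemma Delta_decomp:
  assumes "1 \<le> t"
  shows "Delta t = insert (single t) (\<Union>l\<in>{1..<t}. tcons l ` Delta (t - l))"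
proof
  show "Delta t \<subseteq> insert (single t) (\<Union>l\<in>{1..<t}. tcons l ` Delta (t - l))"
    using Delta_cases[OF _ assms] by blast
  show "insert (single t) (\<Union>l\<in>{1..<t}. tcons l ` Delta (t - l)) \<subseteq> Delta t"
    using single_Delta[OF assms] tcons_Delta by auto
qed

lemma Delta_0: "Delta 0 = {\<lambda>_. 0}"
proof -
  have "\<tau> = (\<lambda>_. 0)" if "\<tau> \<in> Delta 0" for \<tau>
  proof
    fix j show "\<tau> j = 0" using that by (cases j) (auto simp: Delta_def)
  qed
  then show ?thesis unfolding Delta_def by auto
qed

lemma finite_Delta: "finite (Delta t)"
proof (induction t rule: less_induct)
  case (less t)
  show ?case
  proof (cases "t = 0")
    case True then show ?thesis by (simp add: Delta_0)
  next
    case False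
    then show ?thesis using less by (subst Delta_decomp) auto
  qed
qed

lemma tcons_inj: "inj_on (tcons l) (Delta t)"
proof (rule inj_onI)
  fix a b assume a: "a \<in> Delta t" and b: "b \<in> Delta t" and e: "tcons l a = tcons l b"
  show "a = b"
  proof
    fix j
    show "a j = b j"
    proof (cases j)
      case 0 then show ?thesis using Delta_D(1)[OF a] Delta_D(1)[OF b] by simp
    next
      case (Suc j') then show ?thesis using fun_cong[OF e, of "Suc j"] by (simp add: tcons_def)
    qed
  qed
qed

lemma sum_Delta:
  assumes t: "1 \<le> t"
  shows "(\<Sum>\<tau>\<in>Delta t. h \<tau>) = h (single t) + (\<Sum>l\<in>{1..<t}. \<Sum>\<tau>'\<in>Delta (t - l). h (tcons l \<tau>'))"
proof -
  have ni: "single t \<notin> (\<Union>l\<in>{1..<t}. tcons l ` Delta (t - l))"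
  proof
    assume "single t \<in> (\<Union>l\<in>{1..<t}. tcons l ` Delta (t - l))"
    then obtain l \<tau>' where l: "l \<in> {1..<t}" and e: "single t = tcons l \<tau>'" by blast
    have "single t 1 = tcons l \<tau>' 1" using e by simp
    then show False using l by (simp add: single_def tcons_def)
  qed
  have "(\<Sum>\<tau>\<in>Delta t. h \<tau>) = h (single t) + (\<Sum>\<tau>\<in>(\<Union>l\<in>{1..<t}. tcons l ` Delta (t - l)). h \<tau>)"
    using ni finite_Delta by (subst Delta_decomp[OF t]) (simp add: sum.insert)
  also have "(\<Sum>\<tau>\<in>(\<Union>l\<in>{1..<t}. tcons l ` Delta (t - l)). h \<tau>) = (\<Sum>l\<in>{1..<t}. \<Sum>\<tau>\<in>tcons l ` Delta (t - l). h \<tau>)"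
  proof (rule sum.UNION_disjoint)
    show "finite {1..<t}" by simp
    show "\<forall>i\<in>{1..<t}. finite (tcons i ` Delta (t - i))" by (simp add: finite_Delta)
    show "\<forall>i\<in>{1..<t}. \<forall>j\<in>{1..<t}. i \<noteq> j \<longrightarrow> tcons i ` Delta (t - i) \<inter> tcons j ` Delta (t - j) = {}"
    proof (intro ballI impI)
      fix i j :: nat assume "i \<noteq> j"
      have "tcons i a \<noteq> tcons j b" for a b
      proof
        assume "tcons i a = tcons j b"
        then have "tcons i a 1 = tcons j b 1" by simp
        then show False using \<open>i \<noteq> j\<close> by (simp add: tcons_def)
      qed
      then show "tcons i ` Delta (t - i) \<inter> tcons j ` Delta (t - j) = {}" by blast
    qed
  qed
  also have "\<dots> = (\<Sum>l\<in>{1..<t}. \<Sum>\<tau>'\<in>Delta (t - l). h (tcons l \<tau>'))"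
    by (rule sum.cong[OF refl]) (simp add: sum.reindex[OF tcons_inj])
  finally show ?thesis .
qed



lemma finite_nz: "\<tau> \<in> Delta t \<Longrightarrow> finite {j. \<tau> j \<noteq> 0}"
  by (rule finite_subset[of _ "{..t}"]) (auto dest: Delta_le)

lemma rho_ge1:
  assumes D: "\<tau> \<in> Delta t" and t: "1 \<le> t"
  shows "1 \<le> rho \<tau>" "\<tau> (rho \<tau>) \<noteq> 0"
proof -
  have ex: "\<exists>j. \<tau> j \<noteq> 0"
  proof (rule ccontr)
    assume "\<not> ?thesis"
    then have "(\<Sum>j=1..t. \<tau> j) = 0" by auto
    then show False using Delta_D(4)[OF D] t by simp
  qed
  then obtain j where j: "\<tau> j \<noteq> 0" by blast
  have "j \<ge> 1" using j Delta_D(1)[OF D] by (cases j) auto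
  moreover have "j \<le> rho \<tau>" unfolding rho_def using j finite_nz[OF D] by (intro Max_ge) auto
  ultimately show "1 \<le> rho \<tau>" by simp
  have "rho \<tau> \<in> {j. \<tau> j \<noteq> 0}" unfolding rho_def using j finite_nz[OF D] by (intro Max_in) auto
  then show "\<tau> (rho \<tau>) \<noteq> 0" by simp
qed

lemma rho_single: "1 \<le> t \<Longrightarrow> rho (single t) = 1"
proof -
  assume t: "1 \<le> t"
  have "{j. single t j \<noteq> 0} = {1}" using t by (auto simp: single_def)
  then show ?thesis by (simp add: rho_def)
qed

lemma rho_tcons:
  assumes l: "1 \<le> l" and D: "\<tau> \<in> Delta t" and t: "1 \<le> t"
  shows "rho (tcons l \<tau>) = Suc (rho \<tau>)"
proof -
  let ?S = "{j. \<tau> j \<noteq> 0}"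
  have e: "{j. tcons l \<tau> j \<noteq> 0} = insert 1 (Suc ` ?S)"
  proof (rule set_eqI)
    fix j show "j \<in> {j. tcons l \<tau> j \<noteq> 0} \<longleftrightarrow> j \<in> insert 1 (Suc ` ?S)"
      using l Delta_D(1)[OF D] by (cases j) (auto simp: tcons_def)
  qed
  have fin: "finite ?S" using finite_nz[OF D] .
  have mem: "rho \<tau> \<in> ?S" using rho_ge1[OF D t] by simp
  have M: "Max (insert 1 (Suc ` ?S)) = Suc (rho \<tau>)"
  proof (rule Max_eqI)
    show "finite (insert 1 (Suc ` ?S))" using fin by simp
    show "Suc (rho \<tau>) \<in> insert 1 (Suc ` ?S)" using mem by simp
    fix y assume "y \<in> insert 1 (Suc ` ?S)"
    then show "y \<le> Suc (rho \<tau>)" using fin unfolding rho_def by (auto intro: Max_ge)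
  qed
  have "rho (tcons l \<tau>) = Max {j. tcons l \<tau> j \<noteq> 0}" by (rule rho_def)
  also have "\<dots> = Max (insert 1 (Suc ` ?S))" by (simp only: e)
  finally show ?thesis using M by simp
qed

lemma sigma_tcons:
  assumes hr: "rho (tcons l \<tau>) = Suc (rho \<tau>)" and r: "r \<le> rho \<tau>"
  shows "sigma (tcons l \<tau>) r = l + sigma \<tau> r"
proof -
  have "sigma (tcons l \<tau>) r = (\<Sum>j=1..Suc (rho \<tau>) - r. tcons l \<tau> j)" by (simp add: sigma_def hr)
  also have "\<dots> = l + (\<Sum>j=1..Suc (rho \<tau>) - r - 1. \<tau> j)" by (rule sum_tcons) (use r in simp)
  also have "Suc (rho \<tau>) - r - 1 = rho \<tau> - r" using r by simp
  finally show ?thesis by (simp add: sigma_def)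
qed

lemma sigma'_tcons:
  assumes hr: "rho (tcons l \<tau>) = Suc (rho \<tau>)" and r: "r \<le> rho \<tau>"
  shows "sigma' (tcons l \<tau>) r = l + sigma' \<tau> r"
proof -
  have "sigma' (tcons l \<tau>) r = (\<Sum>j=1..Suc (rho \<tau>) + 1 - r. tcons l \<tau> j)" by (simp add: sigma'_def hr)
  also have "\<dots> = l + (\<Sum>j=1..Suc (rho \<tau>) + 1 - r - 1. \<tau> j)" by (rule sum_tcons) (use r in simp)
  also have "Suc (rho \<tau>) + 1 - r - 1 = rho \<tau> + 1 - r" using r by simp
  finally show ?thesis by (simp add: sigma'_def)
qed

lemma sigma_tcons_last:
  assumes hr: "rho (tcons l \<tau>) = Suc (rho \<tau>)"
  shows "sigma (tcons l \<tau>) (Suc (rho \<tau>)) = 0" "sigma' (tcons l \<tau>) (Suc (rho \<tau>)) = l"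
  unfolding sigma_def sigma'_def hr by (simp_all add: tcons_def)

lemma tcons_idx:
  assumes "1 \<le> r" "r \<le> rho \<tau>"
  shows "tcons l \<tau> (Suc (rho \<tau>) + 1 - r) = \<tau> (rho \<tau> + 1 - r)"
  using assms by (simp add: tcons_def Suc_diff_le)

lemma Jset_0_rho: "Jset k 0 = {\<lambda>_. 0}"
proof -
  have "J = (\<lambda>_. 0)" if "J \<in> Jset k 0" for J
  proof
    fix r show "J r = 0" using that by (cases r) (auto simp: Jset_def)
  qed
  then show ?thesis unfolding Jset_def by auto
qed

lemma Jset_0_k: "1 \<le> \<rho> \<Longrightarrow> Jset 0 \<rho> = {}"
  unfolding Jset_def by fastforce

lemma Jset_mono_le:
  fixes J :: "nat \<Rightarrow> nat"
  assumes J: "\<forall>r\<in>{1..<\<rho>}. J r < J (Suc r)" and r: "1 \<le> r" "r \<le> \<rho>"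
  shows "J r \<le> J \<rho>"
proof -
  have "\<And>d. r + d \<le> \<rho> \<Longrightarrow> J r \<le> J (r + d)"
  proof -
    fix d show "r + d \<le> \<rho> \<Longrightarrow> J r \<le> J (r + d)"
    proof (induction d)
      case 0 then show ?case by simp
    next
      case (Suc d)
      have "J (r + d) < J (Suc (r + d))" using J Suc.prems r by auto
      then show ?case using Suc by simp
    qed
  qed
  from this[of "\<rho> - r"] r show ?thesis by simp
qed

lemma JsetD:
  assumes "J \<in> Jset k \<rho>"
  shows "\<And>r. r = 0 \<or> \<rho> < r \<Longrightarrow> J r = 0" "\<And>r. 1 \<le> r \<Longrightarrow> r \<le> \<rho> \<Longrightarrow> 1 \<le> J r"
    "\<And>r. 1 \<le> r \<Longrightarrow> r \<le> \<rho> \<Longrightarrow> J r \<le> k" "\<And>r. 1 \<le> r \<Longrightarrow> r < \<rho> \<Longrightarrow> J r < J (Suc r)"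
  using assms unfolding Jset_def by auto

lemma JsetI:
  assumes "\<And>r. r = 0 \<or> \<rho> < r \<Longrightarrow> J r = 0" "\<And>r. 1 \<le> r \<Longrightarrow> r \<le> \<rho> \<Longrightarrow> 1 \<le> J r"
    "\<And>r. 1 \<le> r \<Longrightarrow> r \<le> \<rho> \<Longrightarrow> J r \<le> k" "\<And>r. 1 \<le> r \<Longrightarrow> r < \<rho> \<Longrightarrow> J r < J (Suc r)"
  shows "J \<in> Jset k \<rho>"
  using assms unfolding Jset_def by auto

lemma Jset_le:
  assumes J: "J \<in> Jset k \<rho>" and r: "1 \<le> r" "r \<le> \<rho>"
  shows "J r \<le> J \<rho>"
proof -
  have "\<forall>r\<in>{1..<\<rho>}. J r < J (Suc r)" using JsetD(4)[OF J] by auto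
  then show ?thesis using Jset_mono_le r by blast
qed

lemma Jset_split:
  assumes \<rho>: "1 \<le> \<rho>"
  shows "Jset (Suc k) \<rho> = Jset k \<rho> \<union> (\<lambda>J. J(\<rho> := Suc k)) ` Jset k (\<rho> - 1)"
proof
  show "Jset (Suc k) \<rho> \<subseteq> Jset k \<rho> \<union> (\<lambda>J. J(\<rho> := Suc k)) ` Jset k (\<rho> - 1)"
  proof
    fix J assume J: "J \<in> Jset (Suc k) \<rho>"
    show "J \<in> Jset k \<rho> \<union> (\<lambda>J. J(\<rho> := Suc k)) ` Jset k (\<rho> - 1)"
    proof (cases "J \<rho> \<le> k")
      case True
      have "J \<in> Jset k \<rho>"
      proof (rule JsetI)
        fix r assume "1 \<le> r" "r \<le> \<rho>"
        then show "J r \<le> k" using Jset_le[OF J] True by (meson le_trans)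
      next
        fix r assume "r = 0 \<or> \<rho> < r" then show "J r = 0" by (rule JsetD(1)[OF J])
      next
        fix r assume "1 \<le> r" "r \<le> \<rho>" then show "1 \<le> J r" by (rule JsetD(2)[OF J])
      next
        fix r assume "1 \<le> r" "r < \<rho>" then show "J r < J (Suc r)" by (rule JsetD(4)[OF J])
      qed
      then show ?thesis by blast
    next
      case False
      then have Jr: "J \<rho> = Suc k" using JsetD(3)[OF J, of \<rho>] \<rho> by simp
      have "J(\<rho> := 0) \<in> Jset k (\<rho> - 1)"
      proof (rule JsetI)
        fix r assume r: "1 \<le> r" "r \<le> \<rho> - 1"
        have "J r < J (Suc r)" using JsetD(4)[OF J, of r] r by simp
        also have "J (Suc r) \<le> J \<rho>" using Jset_le[OF J, of "Suc r"] r by simp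
        finally show "(J(\<rho> := 0)) r \<le> k" using Jr r by simp
      next
        fix r assume r: "r = 0 \<or> \<rho> - 1 < r"
        show "(J(\<rho> := 0)) r = 0"
        proof (cases "r = \<rho>")
          case False
          then have "r = 0 \<or> \<rho> < r" using r by auto
          then show ?thesis using JsetD(1)[OF J] by simp
        qed simp
      next
        fix r assume "1 \<le> r" "r \<le> \<rho> - 1" then show "1 \<le> (J(\<rho> := 0)) r"
          using JsetD(2)[OF J, of r] \<rho> by simp
      next
        fix r assume r: "1 \<le> r" "r < \<rho> - 1" then show "(J(\<rho> := 0)) r < (J(\<rho> := 0)) (Suc r)"
          using JsetD(4)[OF J, of r] by auto
      qed
      moreover have "J = (J(\<rho> := 0))(\<rho> := Suc k)" using Jr by auto
      ultimately show ?thesis by blast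
    qed
  qed
  show "Jset k \<rho> \<union> (\<lambda>J. J(\<rho> := Suc k)) ` Jset k (\<rho> - 1) \<subseteq> Jset (Suc k) \<rho>"
  proof
    fix J assume "J \<in> Jset k \<rho> \<union> (\<lambda>J. J(\<rho> := Suc k)) ` Jset k (\<rho> - 1)"
    then show "J \<in> Jset (Suc k) \<rho>"
    proof
      assume J: "J \<in> Jset k \<rho>"
      show ?thesis
      proof (rule JsetI)
        fix r assume "r = 0 \<or> \<rho> < r" then show "J r = 0" by (rule JsetD(1)[OF J])
      next
        fix r assume "1 \<le> r" "r \<le> \<rho>" then show "1 \<le> J r" by (rule JsetD(2)[OF J])
      next
        fix r assume "1 \<le> r" "r \<le> \<rho>" then show "J r \<le> Suc k" using JsetD(3)[OF J, of r] by simp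
      next
        fix r assume "1 \<le> r" "r < \<rho>" then show "J r < J (Suc r)" by (rule JsetD(4)[OF J])
      qed
    next
      assume "J \<in> (\<lambda>J. J(\<rho> := Suc k)) ` Jset k (\<rho> - 1)"
      then obtain J' where J': "J' \<in> Jset k (\<rho> - 1)" and e: "J = J'(\<rho> := Suc k)" by blast
      show ?thesis
      proof (rule JsetI)
        fix r assume r: "1 \<le> r" "r < \<rho>"
        show "J r < J (Suc r)"
        proof (cases "Suc r = \<rho>")
          case True
          then have "r \<le> \<rho> - 1" by simp
          then show ?thesis using JsetD(3)[OF J', of r] r True unfolding e by simp
        next
          case False then show ?thesis using JsetD(4)[OF J', of r] r unfolding e by simp
        qed
      next
        fix r assume r: "r = 0 \<or> \<rho> < r"
        then have "r \<noteq> \<rho>" using \<rho> by auto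
        moreover have "r = 0 \<or> \<rho> - 1 < r" using r by auto
        ultimately show "J r = 0" using JsetD(1)[OF J'] unfolding e by simp
      next
        fix r assume r: "1 \<le> r" "r \<le> \<rho>"
        show "1 \<le> J r"
        proof (cases "r = \<rho>")
          case False then show ?thesis using JsetD(2)[OF J', of r] r unfolding e by simp
        qed (simp add: e)
      next
        fix r assume r: "1 \<le> r" "r \<le> \<rho>"
        show "J r \<le> Suc k"
        proof (cases "r = \<rho>")
          case False
          then have "r \<le> \<rho> - 1" using r by simp
          then show ?thesis using JsetD(3)[OF J', of r] r False unfolding e by simp
        qed (simp add: e)
      qed
    qed
  qed
qed

lemma finite_Jset: "finite (Jset k \<rho>)"
proof (induction k arbitrary: \<rho>)
  case 0 then show ?case by (cases \<rho>) (auto simp: Jset_0_rho Jset_0_k)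
next
  case (Suc k) then show ?case by (cases \<rho>) (auto simp: Jset_0_rho Jset_split)
qed

lemma sum_Jset_Suc:
  assumes \<rho>: "1 \<le> \<rho>"
  shows "(\<Sum>J\<in>Jset (Suc k) \<rho>. f J) = (\<Sum>J\<in>Jset k \<rho>. f J) + (\<Sum>J\<in>Jset k (\<rho> - 1). f (J(\<rho> := Suc k)))"
proof -
  have disj: "Jset k \<rho> \<inter> (\<lambda>J. J(\<rho> := Suc k)) ` Jset k (\<rho> - 1) = {}"
  proof -
    have 1: "J \<rho> \<le> k" if "J \<in> Jset k \<rho>" for J using JsetD(3)[OF that, of \<rho>] \<rho> by simp
    have 2: "J \<rho> = Suc k" if "J \<in> (\<lambda>J. J(\<rho> := Suc k)) ` Jset k (\<rho> - 1)" for J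
      using that by auto
    show ?thesis
    proof (rule equals0I)
      fix J assume "J \<in> Jset k \<rho> \<inter> (\<lambda>J. J(\<rho> := Suc k)) ` Jset k (\<rho> - 1)"
      then have "J \<rho> \<le> k" "J \<rho> = Suc k" using 1 2 by blast+
      then show False by simp
    qed
  qed
  have inj: "inj_on (\<lambda>J. J(\<rho> := Suc k)) (Jset k (\<rho> - 1))"
  proof (rule inj_onI)
    fix a b assume a: "a \<in> Jset k (\<rho> - 1)" and b: "b \<in> Jset k (\<rho> - 1)" and e: "a(\<rho> := Suc k) = b(\<rho> := Suc k)"
    have "a \<rho> = 0" "b \<rho> = 0" using a b \<rho> unfolding Jset_def by auto
    then show "a = b" using e by (metis fun_upd_triv fun_upd_upd)
  qed
  have "(\<Sum>J\<in>Jset (Suc k) \<rho>. f J) = (\<Sum>J\<in>Jset k \<rho>. f J) + (\<Sum>J\<in>(\<lambda>J. J(\<rho> := Suc k)) ` Jset k (\<rho> - 1). f J)"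
    unfolding Jset_split[OF \<rho>] by (rule sum.union_disjoint[OF finite_Jset finite_imageI[OF finite_Jset] disj])
  also have "(\<Sum>J\<in>(\<lambda>J. J(\<rho> := Suc k)) ` Jset k (\<rho> - 1). f J) = (\<Sum>J\<in>Jset k (\<rho> - 1). f (J(\<rho> := Suc k)))"
    by (rule sum.reindex[OF inj, unfolded comp_def])
  finally show ?thesis .
qed

lemma mchain_1: "mchain d F (Suc 0) = F 1"
  by (simp add: mchain_def)

lemma mchain_Suc: "1 \<le> n \<Longrightarrow> mchain d F (Suc n) = mmul (d n) (mchain d F n) (F (Suc n))"
  unfolding mchain_def by simp

lemma mchain_cong:
  "1 \<le> n \<Longrightarrow> (\<And>r. 1 \<le> r \<Longrightarrow> r \<le> n \<Longrightarrow> F r = F' r) \<Longrightarrow> (\<And>r. 1 \<le> r \<Longrightarrow> r < n \<Longrightarrow> d r = d' r)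
   \<Longrightarrow> mchain d F n = mchain d' F' n"
proof (induction n)
  case 0 then show ?case by simp
next
  case (Suc n)
  show ?case
  proof (cases "n = 0")
    case True then show ?thesis using Suc.prems by (simp add: mchain_1)
  next
    case False
    then have "mchain d F n = mchain d' F' n" using Suc by simp
    then show ?thesis using False Suc.prems by (simp add: mchain_Suc)
  qed
qed



lemma mmul_maddL: "mmul q (madd X Y) B i j K = mmul q X B i j K + mmul q Y B i j K"
  unfolding mmul_def madd_def by (simp add: wedge_add_left sum.distrib)

lemma mmul_maddR: "mmul q A (madd Y Z) i j K = mmul q A Y i j K + mmul q A Z i j K"
  unfolding mmul_def madd_def by (simp add: wedge_add_right sum.distrib)

lemma mmul_add3L: "mmul q (\<lambda>i j K. X i j K + Y i j K + Z i j K) B i j K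
   = mmul q X B i j K + mmul q Y B i j K + mmul q Z B i j K"
proof -
  have "(\<lambda>i j K. X i j K + Y i j K + Z i j K) = madd (madd X Y) Z" by (simp add: madd_def)
  then show ?thesis by (simp add: mmul_maddL)
qed

lemma mmul_sumL: "mmul q (\<lambda>i j K. \<Sum>x\<in>S. F x i j K) B i j K = (\<Sum>x\<in>S. mmul q (F x) B i j K)"
  unfolding mmul_def by (simp add: wedge_sum_left, rule sum.swap)

lemma mmul_congL: "(\<And>l. l < q \<Longrightarrow> A i l = A' i l) \<Longrightarrow> mmul q A B i j = mmul q A' B i j"
  unfolding mmul_def by simp

lemma mmul_congR: "(\<And>l. l < q \<Longrightarrow> B l j = B' l j) \<Longrightarrow> mmul q A B i j = mmul q A B' i j"
  unfolding mmul_def by simp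

lemma mmul_zeroL[simp]: "mmul q (\<lambda>i j K. 0) B i j K = 0"
  unfolding mmul_def by simp

definition lastf :: "(nat \<Rightarrow> nat) \<Rightarrow> (nat \<Rightarrow> ('x, 'n::{finite,linorder}) fam) \<Rightarrow> nat \<Rightarrow> nat \<Rightarrow> nat \<Rightarrow> 'x \<Rightarrow> 'n fmat" where
  "lastf p \<eta> k s l x = mmul (p s) (mmul (p (s + l)) (gs p \<eta> (s + l) k x) (\<eta> (Suc k) s l x))
       (minv (p s) (gs p \<eta> s (Suc k) x))"

definition chainT :: "(nat \<Rightarrow> nat) \<Rightarrow> (nat \<Rightarrow> ('x, 'n::{finite,linorder}) fam) \<Rightarrow> nat \<Rightarrow> (nat \<Rightarrow> nat) \<Rightarrow> (nat \<Rightarrow> nat) \<Rightarrow> 'x \<Rightarrow> 'n fmat" where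
  "chainT p \<eta> s \<tau> J x = mchain (\<lambda>r. p (s + sigma \<tau> r)) (factor p \<eta> s \<tau> J x) (rho \<tau>)"

definition Sm :: "(nat \<Rightarrow> nat) \<Rightarrow> (nat \<Rightarrow> ('x, 'n::{finite,linorder}) fam) \<Rightarrow> nat \<Rightarrow> nat \<Rightarrow> nat \<Rightarrow> 'x \<Rightarrow> 'n fmat" where
  "Sm p \<eta> k s t x = (\<lambda>i j K. \<Sum>\<tau>\<in>Delta t. \<Sum>J\<in>Jset k (rho \<tau>). chainT p \<eta> s \<tau> J x i j K)"

lemma rhs_Sm: "rhs p \<eta> k s t x = mmul (p s) (Sm p \<eta> k s t x) (gs p \<eta> s k x)"
  unfolding rhs_def Sm_def chainT_def by simp

lemma chain_single:
  assumes t: "1 \<le> t"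
  shows "chainT p \<eta> s (single t) ((\<lambda>_. 0)(1 := Suc k)) x = lastf p \<eta> k s t x"
proof -
  have r: "rho (single t) = 1" using rho_single[OF t] .
  have s0: "sigma (single t) 1 = 0" by (simp add: sigma_def r)
  have s1: "sigma' (single t) 1 = t" unfolding sigma'_def r by (simp add: single_def)
  have m: "mchain d F 1 = F 1" for d F by (simp add: mchain_def)
  show ?thesis unfolding chainT_def r m factor_def s0 s1
    by (simp add: lastf_def single_def)
qed

lemma chain_tcons:
  assumes l: "1 \<le> l" and D: "\<tau>' \<in> Delta t'" and t': "1 \<le> t'" and J': "J' \<in> Jset k (rho \<tau>')"
  shows "chainT p \<eta> s (tcons l \<tau>') (J'(Suc (rho \<tau>') := Suc k)) x
       = mmul (p (s + l)) (chainT p \<eta> (s + l) \<tau>' J' x) (lastf p \<eta> k s l x)"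
proof -
  define \<rho>' where "\<rho>' = rho \<tau>'"
  define \<tau> where "\<tau> = tcons l \<tau>'"
  define J where "J = J'(Suc \<rho>' := Suc k)"
  have hr: "rho \<tau> = Suc \<rho>'" unfolding \<tau>_def \<rho>'_def by (rule rho_tcons[OF l D t'])
  have hr': "rho (tcons l \<tau>') = Suc (rho \<tau>')" using hr unfolding \<tau>_def \<rho>'_def .
  have r1: "1 \<le> \<rho>'" unfolding \<rho>'_def by (rule rho_ge1[OF D t'])
  let ?d = "\<lambda>r. p (s + sigma \<tau> r)"
  let ?F = "factor p \<eta> s \<tau> J x"
  let ?d' = "\<lambda>r. p (s + l + sigma \<tau>' r)"
  let ?F' = "factor p \<eta> (s + l) \<tau>' J' x"
  have "chainT p \<eta> s \<tau> J x = mmul (?d \<rho>') (mchain ?d ?F \<rho>') (?F (Suc \<rho>'))"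
    unfolding chainT_def hr by (rule mchain_Suc[OF r1])
  also have "?d \<rho>' = p (s + l)"
    using sigma_tcons[OF hr', of \<rho>'] unfolding \<tau>_def \<rho>'_def by (simp add: sigma_def)
  also have "mchain ?d ?F \<rho>' = mchain ?d' ?F' \<rho>'"
  proof (rule mchain_cong[OF r1])
    fix r assume r: "1 \<le> r" "r < \<rho>'"
    show "?d r = ?d' r" using sigma_tcons[OF hr', of r] r unfolding \<tau>_def \<rho>'_def by (simp add: add.assoc)
  next
    fix r assume r: "1 \<le> r" "r \<le> \<rho>'"
    have a: "sigma \<tau> r = l + sigma \<tau>' r" using sigma_tcons[OF hr', of r] r unfolding \<tau>_def \<rho>'_def by simp
    have b: "sigma' \<tau> r = l + sigma' \<tau>' r" using sigma'_tcons[OF hr', of r] r unfolding \<tau>_def \<rho>'_def by simp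
    have c: "\<tau> (rho \<tau> + 1 - r) = \<tau>' (rho \<tau>' + 1 - r)"
      using tcons_idx[of r \<tau>' l] r hr' unfolding \<tau>_def \<rho>'_def by simp
    have d: "J r = J' r" using r unfolding J_def by simp
    show "?F r = ?F' r" unfolding factor_def a b c d by (simp add: add.assoc)
  qed
  also have "?F (Suc \<rho>') = lastf p \<eta> k s l x"
  proof -
    have a: "sigma \<tau> (Suc \<rho>') = 0" "sigma' \<tau> (Suc \<rho>') = l"
      using sigma_tcons_last[OF hr'] unfolding \<tau>_def \<rho>'_def by auto
    have c: "\<tau> (rho \<tau> + 1 - Suc \<rho>') = l" unfolding hr by (simp add: \<tau>_def tcons_def)
    have d: "J (Suc \<rho>') = Suc k" unfolding J_def by simp
    show ?thesis unfolding factor_def a c d lastf_def by simp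
  qed
  finally show ?thesis unfolding \<tau>_def J_def \<rho>'_def chainT_def by simp
qed

lemma Sm_0: "1 \<le> t \<Longrightarrow> Sm p \<eta> 0 s t x = (\<lambda>i j K. 0)"
  unfolding Sm_def using rho_ge1(1) by (auto simp: Jset_0_k intro!: ext sum.neutral)

lemma Sm_Suc:
  assumes t: "1 \<le> t"
  shows "Sm p \<eta> (Suc k) s t x i j K = Sm p \<eta> k s t x i j K + lastf p \<eta> k s t x i j K
     + (\<Sum>l\<in>{1..<t}. mmul (p (s + l)) (Sm p \<eta> k (s + l) (t - l) x) (lastf p \<eta> k s l x) i j K)"
proof -
  let ?c = "\<lambda>s \<tau> J. chainT p \<eta> s \<tau> J x i j K"
  let ?h = "\<lambda>\<tau>. \<Sum>J\<in>Jset k (rho \<tau> - 1). ?c s \<tau> (J(rho \<tau> := Suc k))"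
  have "Sm p \<eta> (Suc k) s t x i j K = (\<Sum>\<tau>\<in>Delta t. (\<Sum>J\<in>Jset k (rho \<tau>). ?c s \<tau> J) + ?h \<tau>)"
    unfolding Sm_def using rho_ge1(1)[OF _ t] by (auto intro!: sum.cong simp: sum_Jset_Suc)
  also have "\<dots> = Sm p \<eta> k s t x i j K + (\<Sum>\<tau>\<in>Delta t. ?h \<tau>)"
    unfolding Sm_def by (simp add: sum.distrib)
  also have "(\<Sum>\<tau>\<in>Delta t. ?h \<tau>) = ?h (single t) + (\<Sum>l\<in>{1..<t}. \<Sum>\<tau>'\<in>Delta (t - l). ?h (tcons l \<tau>'))"
    by (rule sum_Delta[OF t])
  also have "?h (single t) = lastf p \<eta> k s t x i j K"
    using chain_single[OF t, of p \<eta> s k x] by (simp add: rho_single[OF t] Jset_0_rho)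
  also have "(\<Sum>l\<in>{1..<t}. \<Sum>\<tau>'\<in>Delta (t - l). ?h (tcons l \<tau>'))
      = (\<Sum>l\<in>{1..<t}. mmul (p (s + l)) (Sm p \<eta> k (s + l) (t - l) x) (lastf p \<eta> k s l x) i j K)"
  proof (rule sum.cong[OF refl])
    fix l assume l: "l \<in> {1..<t}"
    have "(\<Sum>\<tau>'\<in>Delta (t - l). ?h (tcons l \<tau>'))
        = (\<Sum>\<tau>'\<in>Delta (t - l). \<Sum>J\<in>Jset k (rho \<tau>'). mmul (p (s + l)) (chainT p \<eta> (s + l) \<tau>' J x) (lastf p \<eta> k s l x) i j K)"
    proof (rule sum.cong[OF refl])
      fix \<tau>' assume D: "\<tau>' \<in> Delta (t - l)"
      have t': "1 \<le> t - l" using l by auto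
      have hr: "rho (tcons l \<tau>') = Suc (rho \<tau>')" using rho_tcons[OF _ D t'] l by auto
      show "?h (tcons l \<tau>') = (\<Sum>J\<in>Jset k (rho \<tau>'). mmul (p (s + l)) (chainT p \<eta> (s + l) \<tau>' J x) (lastf p \<eta> k s l x) i j K)"
        unfolding hr using chain_tcons[OF _ D t', where l=l and k=k and p=p and \<eta>=\<eta> and s=s and x=x] l by (auto intro!: sum.cong)
    qed
    also have "\<dots> = mmul (p (s + l)) (Sm p \<eta> k (s + l) (t - l) x) (lastf p \<eta> k s l x) i j K"
      unfolding Sm_def by (simp add: mmul_sumL)
    finally show "(\<Sum>\<tau>'\<in>Delta (t - l). ?h (tcons l \<tau>')) = mmul (p (s + l)) (Sm p \<eta> k (s + l) (t - l) x) (lastf p \<eta> k s l x) i j K" .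
  qed
  finally show ?thesis by (simp add: add.assoc)
qed



definition EE :: "(nat \<Rightarrow> nat) \<Rightarrow> (nat \<Rightarrow> ('x, 'n::{finite,linorder}) fam) \<Rightarrow> nat \<Rightarrow> ('x, 'n) fam" where
  "EE p \<eta> k = (if k = 0 then (\<lambda>s t x i j K. 0) else etaK p \<eta> k)"

lemma EE_Suc: "EE p \<eta> (Suc k) = fwedge p (EE p \<eta> k) (\<eta> (Suc k))"
proof (cases k)
  case 0
  have "fwedge p (\<lambda>s t x i j K. 0) (\<eta> 1) = \<eta> 1"
    unfolding fwedge_def by (intro ext) simp
  then show ?thesis using 0 by (simp add: EE_def etaK_def)
next
  case (Suc k')
  have "[2..<Suc (Suc k)] = [2..<Suc k] @ [Suc k]" using Suc by simp
  then show ?thesis using Suc by (simp add: EE_def etaK_def)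
qed

lemma madd_apply: "madd A B i j K = A i j K + B i j K"
  by (simp add: madd_def)

lemma sum_atMost_split: "1 \<le> (t::nat) \<Longrightarrow> (\<Sum>l\<le>t. f l) = f 0 + f t + (\<Sum>l\<in>{1..<t}. (f l :: complex))"
proof -
  assume t: "1 \<le> t"
  have e: "{..t} = insert 0 (insert t {1..<t})" using t by auto
  have "0 \<notin> insert t {1..<t}" "t \<notin> {1..<t}" using t by auto
  then show ?thesis unfolding e by (simp add: add.assoc)
qed

lemma main_ind:
  assumes P: "\<And>j. j \<ge> 1 \<Longrightarrow> inP m p U (\<eta> j)" and x: "x \<in> U"
  shows "(\<forall>s i j. i < p s \<longrightarrow> j < p s \<longrightarrow> (\<lambda>K. idm (p s) i j K + EE p \<eta> k s 0 x i j K) = gs p \<eta> s k x i j)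
       \<and> (\<forall>s t i j. 1 \<le> t \<longrightarrow> i < p (s + t) \<longrightarrow> j < p s \<longrightarrow>
            EE p \<eta> k s t x i j = mmul (p s) (Sm p \<eta> k s t x) (gs p \<eta> s k x) i j)"
proof (induction k)
  case 0
  show ?case by (auto simp: EE_def gs_0 Sm_0)
next
  case (Suc k)
  have IH1: "\<And>s i j. i < p s \<Longrightarrow> j < p s \<Longrightarrow> madd (idm (p s)) (EE p \<eta> k s 0 x) i j = gs p \<eta> s k x i j"
    using Suc.IH unfolding madd_def by auto
  have IH2: "\<And>s t i j. 1 \<le> t \<Longrightarrow> i < p (s + t) \<Longrightarrow> j < p s \<Longrightarrow>
            EE p \<eta> k s t x i j = mmul (p s) (Sm p \<eta> k s t x) (gs p \<eta> s k x) i j"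
    using Suc.IH by blast
  let ?E = "EE p \<eta> k"
  let ?N = "\<lambda>s l. \<eta> (Suc k) s l x"
  let ?G = "\<lambda>s. gs p \<eta> s k x"
  let ?G' = "\<lambda>s. gs p \<eta> s (Suc k) x"
  have E': "\<And>s t i j K. EE p \<eta> (Suc k) s t x i j K = ?E s t x i j K + ?N s t i j K
      + (\<Sum>l\<le>t. mmul (p (s + l)) (?E (s + l) (t - l) x) (?N s l) i j K)"
    unfolding EE_Suc fwedge_def by simp
  have G': "\<And>s. ?G' s = mmul (p s) (?G s) (madd (idm (p s)) (?N s 0))"
    by (simp add: gs_Suc gsj_Suc)
  have part1: "\<forall>s i j. i < p s \<longrightarrow> j < p s \<longrightarrow> (\<lambda>K. idm (p s) i j K + EE p \<eta> (Suc k) s 0 x i j K) = ?G' s i j"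
  proof (intro allI impI ext)
    fix s i j K assume i: "i < p s" and j: "j < p s"
    have "?G' s i j K = mmul (p s) (madd (idm (p s)) (?E s 0 x)) (madd (idm (p s)) (?N s 0)) i j K"
      unfolding G' using mmul_congL[of "p s" "?G s" i "madd (idm (p s)) (?E s 0 x)"] IH1 i by simp
    also have "\<dots> = idm (p s) i j K + ?N s 0 i j K + ?E s 0 x i j K + mmul (p s) (?E s 0 x) (?N s 0) i j K"
      by (simp add: mmul_maddL mmul_maddR mmul_idm_left[OF i] mmul_idm_right[OF j] madd_apply)
    finally show "idm (p s) i j K + EE p \<eta> (Suc k) s 0 x i j K = ?G' s i j K"
      unfolding E' by simp
  qed
  have part2: "\<forall>s t i j. 1 \<le> t \<longrightarrow> i < p (s + t) \<longrightarrow> j < p s \<longrightarrow>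
            EE p \<eta> (Suc k) s t x i j = mmul (p s) (Sm p \<eta> (Suc k) s t x) (?G' s) i j"
  proof (intro allI impI ext)
    fix s t i j K assume t: "1 \<le> t" and i: "i < p (s + t)" and j: "j < p s"
    let ?f = "\<lambda>l. mmul (p (s + l)) (?E (s + l) (t - l) x) (?N s l) i j K"
    have Sme: "Sm p \<eta> (Suc k) s t x = (\<lambda>i j K. Sm p \<eta> k s t x i j K + lastf p \<eta> k s t x i j K
     + (\<Sum>l\<in>{1..<t}. mmul (p (s + l)) (Sm p \<eta> k (s + l) (t - l) x) (lastf p \<eta> k s l x) i j K))"
      by (intro ext) (rule Sm_Suc[OF t])
    have minv: "\<And>s. mmul (p s) (minv (p s) (?G' s)) (?G' s) = idm (p s)"
      by (rule gs_minv_left[OF P x])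
    have T1: "mmul (p s) (Sm p \<eta> k s t x) (?G' s) i j K = ?E s t x i j K + ?f 0"
    proof -
      have e1: "mmul (p s) (Sm p \<eta> k s t x) (?G' s) = mmul (p s) (mmul (p s) (Sm p \<eta> k s t x) (?G s)) (madd (idm (p s)) (?N s 0))"
        unfolding G' by (simp only: mmul_assoc)
      have e2: "mmul (p s) (mmul (p s) (Sm p \<eta> k s t x) (?G s)) (madd (idm (p s)) (?N s 0)) i j = mmul (p s) (?E s t x) (madd (idm (p s)) (?N s 0)) i j"
        by (rule mmul_congL) (use IH2[OF t i] in simp)
      have "mmul (p s) (Sm p \<eta> k s t x) (?G' s) i j K = mmul (p s) (?E s t x) (madd (idm (p s)) (?N s 0)) i j K"
        using e1 e2 by simp
      then show ?thesis by (simp add: mmul_maddR mmul_idm_right[OF j])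
    qed
    have T2: "mmul (p s) (lastf p \<eta> k s t x) (?G' s) i j K = ?N s t i j K + ?f t"
    proof -
      let ?Y = "mmul (p (s + t)) (?G (s + t)) (?N s t)"
      have "mmul (p s) (lastf p \<eta> k s t x) (?G' s) = mmul (p s) ?Y (mmul (p s) (minv (p s) (?G' s)) (?G' s))"
        by (simp only: lastf_def mmul_assoc)
      also have "\<dots> = mmul (p s) ?Y (idm (p s))" using minv by simp
      finally have e1: "mmul (p s) (lastf p \<eta> k s t x) (?G' s) i j = ?Y i j" by (simp add: mmul_idm_right[OF j])
      have e2: "?Y i j = mmul (p (s + t)) (madd (idm (p (s + t))) (?E (s + t) 0 x)) (?N s t) i j"
        by (rule mmul_congL) (use IH1 i in simp)
      have "mmul (p s) (lastf p \<eta> k s t x) (?G' s) i j K = mmul (p (s + t)) (madd (idm (p (s + t))) (?E (s + t) 0 x)) (?N s t) i j K"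
        using e1 e2 by simp
      then show ?thesis by (simp add: mmul_maddL mmul_idm_left[OF i])
    qed
    have T3: "mmul (p s) (mmul (p (s + l)) (Sm p \<eta> k (s + l) (t - l) x) (lastf p \<eta> k s l x)) (?G' s) i j K = ?f l"
      if l: "l \<in> {1..<t}" for l
    proof -
      let ?Y = "mmul (p (s + l)) (?G (s + l)) (?N s l)"
      let ?S = "Sm p \<eta> k (s + l) (t - l) x"
      have "mmul (p s) (mmul (p (s + l)) ?S (lastf p \<eta> k s l x)) (?G' s)
          = mmul (p (s + l)) ?S (mmul (p s) ?Y (mmul (p s) (minv (p s) (?G' s)) (?G' s)))"
        by (simp only: lastf_def mmul_assoc)
      also have "\<dots> = mmul (p (s + l)) ?S (mmul (p s) ?Y (idm (p s)))" using minv by simp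
      finally have "mmul (p s) (mmul (p (s + l)) ?S (lastf p \<eta> k s l x)) (?G' s) i j
          = mmul (p (s + l)) ?S (mmul (p s) ?Y (idm (p s))) i j" by simp
      also have "\<dots> = mmul (p (s + l)) ?S ?Y i j"
        by (rule mmul_congR) (simp add: mmul_idm_right[OF j])
      also have "\<dots> = mmul (p (s + l)) (mmul (p (s + l)) ?S (?G (s + l))) (?N s l) i j"
        by (simp only: mmul_assoc)
      also have "\<dots> = mmul (p (s + l)) (?E (s + l) (t - l) x) (?N s l) i j"
      proof (rule mmul_congL)
        fix l' assume l': "l' < p (s + l)"
        have t': "1 \<le> t - l" using l by auto
        have i': "i < p (s + l + (t - l))" using i l by simp
        show "mmul (p (s + l)) ?S (?G (s + l)) i l' = ?E (s + l) (t - l) x i l'"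
          using IH2[OF t' i' l'] by simp
      qed
      finally show ?thesis by simp
    qed
    have "mmul (p s) (Sm p \<eta> (Suc k) s t x) (?G' s) i j K
       = mmul (p s) (Sm p \<eta> k s t x) (?G' s) i j K + mmul (p s) (lastf p \<eta> k s t x) (?G' s) i j K
         + (\<Sum>l\<in>{1..<t}. mmul (p s) (mmul (p (s + l)) (Sm p \<eta> k (s + l) (t - l) x) (lastf p \<eta> k s l x)) (?G' s) i j K)"
      unfolding Sme by (simp add: mmul_add3L mmul_sumL)
    also have "\<dots> = ?E s t x i j K + ?f 0 + (?N s t i j K + ?f t) + (\<Sum>l\<in>{1..<t}. ?f l)"
      using T1 T2 T3 by simp
    also have "\<dots> = EE p \<eta> (Suc k) s t x i j K"
      unfolding E' sum_atMost_split[OF t] by (simp add: algebra_simps)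
    finally show "EE p \<eta> (Suc k) s t x i j K = mmul (p s) (Sm p \<eta> (Suc k) s t x) (?G' s) i j K" by simp
  qed
  show ?case using part1 part2 by blast
qed

theorem mainTheorem8:
  fixes m :: nat and p :: "nat \<Rightarrow> nat" and U :: "((complex, 'n::{finite,linorder}) vec) set"
    and \<eta> :: "nat \<Rightarrow> ((complex, 'n) vec, 'n) fam"
  assumes "open U"
    and "\<And>j. j \<ge> 1 \<Longrightarrow> inP m p U (\<eta> j)"
    and "k \<ge> 1" and "t \<ge> 1"
    and "x \<in> U" and "a < p (s + t)" and "b < p s"
  shows "etaK p \<eta> k s t x a b = rhs p \<eta> k s t x a b"
proof -
  have "EE p \<eta> k s t x a b = mmul (p s) (Sm p \<eta> k s t x) (gs p \<eta> s k x) a b"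
    using main_ind[where m=m and p=p and U=U and \<eta>=\<eta> and x=x and k=k] assms(2,4,5,6,7) by blast
  moreover have "EE p \<eta> k = etaK p \<eta> k" using assms(3) by (simp add: EE_def)
  ultimately show ?thesis by (simp add: rhs_Sm)
qed

end
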